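(* Let $\Theta\sim U[0,1]$ and let $T^{2,1,\Theta}$, $T^{2,2,\Theta}$ be the random policies with $T^{2,1,\Theta}_i=\mathcal{R}_{2,1,\Theta}(T_i^* )$ and $T^{2,2,\Theta}_i=\mathcal{R}_{2,2,\Theta}(T_i^* )$ for $i\in[n]$. Then $\mathbb{E}_\Theta\big[\min\{F(T^{2,1,\Theta}),F(T^{2,2,\Theta})\}\big]\le 1.2585\cdot\mathrm{OPT}(P)$.
   Context: An instance consists of integers $n\ge 1$, $D\ge 1$; a joint ordering cost $K_0>0$; for each commodity $i\in[n]$ an ordering cost $K_i>0$ and a holding coefficient $H_i>0$; and resource coefficients $\alpha_{id}\ge 0$. A policy is $T=(T_1,\dots,T_n)\in\mathbb{R}_{>0}^n$; it is resource-feasible if $\sum_{i}\alpha_{id}/T_i\le 1$ for every $d\in[D]$. For $g>0$, $\Delta\ge 0$, $\mathcal{M}_{g,\Delta}=\{0,g,\dots,\lfloor\Delta/g\rfloor g\}$; $N(T,\Delta)=|\bigcup_{i}\mathcal{M}_{T_i,\Delta}|$; $J(T)=K_0\limsup_{\Delta\to\infty}N(T,\Delta)/\Delta$; $F(T)=J(T)+\sum_i(K_i/T_i+H_iT_i)$. The convex relaxation (P) is: minimize $K_0/T_{\min}+\sum_{i\in[n]}(K_i/T_i+H_iT_i)$ over $(T_{\min},T_1,\dots,T_n)$ subject to $T_i\ge T_{\min}\ge0$ for all $i$ and $\sum_i\alpha_{id}/T_i\le1$ for all $d$. $\mathrm{OPT}(P)$ is its optimal value and $T^*=(T^*_{\min},T^*_1,\dots,T^*_n)$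 is a fixed optimal solution (with $T^*_{\min}>0$). For integers $m\ge2$, $k\ge1$ and $\theta\in[0,1]$: $\mathcal{G}_{m,k,\theta}=\{m^{(p+\theta)/k}T^*_{\min}:p\in\mathbb{Z}\}$ and $\mathcal{R}_{m,k,\theta}(t)=\min\{g\in\mathcal{G}_{m,k,\theta}:g>t\}$ for $t>0$. *)

theory Defs
  imports "HOL-Analysis.Analysis"
begin

text \<open>Commodities are indexed by 1..n, resources by 1..D. A policy is a function
  nat => real of which only the values on 1..n matter.\<close>

definition mult_set :: "real \<Rightarrow> real \<Rightarrow> real set" where
  "mult_set g \<Delta> = (\<lambda>k::nat. real k * g) ` {0..nat \<lfloor>\<Delta> / g\<rfloor>}"

definition Ncount :: "nat \<Rightarrow> (nat \<Rightarrow> real) \<Rightarrow> real \<Rightarrow> nat" where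
  "Ncount n T \<Delta> = card (\<Union>i\<in>{1..n}. mult_set (T i) \<Delta>)"

definition Jcost :: "nat \<Rightarrow> real \<Rightarrow> (nat \<Rightarrow> real) \<Rightarrow> real" where
  "Jcost n K0 T = K0 * real_of_ereal
     (Limsup at_top (\<lambda>\<Delta>::real. ereal (real (Ncount n T \<Delta>) / \<Delta>)))"

definition Fcost :: "nat \<Rightarrow> real \<Rightarrow> (nat \<Rightarrow> real) \<Rightarrow> (nat \<Rightarrow> real) \<Rightarrow> (nat \<Rightarrow> real) \<Rightarrow> real" where
  "Fcost n K0 K H T = Jcost n K0 T + (\<Sum>i\<in>{1..n}. K i / T i + H i * T i)"

text \<open>Relaxation (P). The variable is a pair (Tmin, T). The objective K0/Tmin is +infinity
  at Tmin = 0, so feasibility is taken with Tmin > 0.\<close>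

definition P_feasible :: "nat \<Rightarrow> nat \<Rightarrow> (nat \<Rightarrow> nat \<Rightarrow> real) \<Rightarrow> real \<Rightarrow> (nat \<Rightarrow> real) \<Rightarrow> bool" where
  "P_feasible n D \<alpha> Tmin T \<longleftrightarrow> 0 < Tmin \<and> (\<forall>i\<in>{1..n}. Tmin \<le> T i) \<and>
     (\<forall>d\<in>{1..D}. (\<Sum>i\<in>{1..n}. \<alpha> i d / T i) \<le> 1)"

definition P_obj :: "nat \<Rightarrow> real \<Rightarrow> (nat \<Rightarrow> real) \<Rightarrow> (nat \<Rightarrow> real) \<Rightarrow> real \<Rightarrow> (nat \<Rightarrow> real) \<Rightarrow> real" where
  "P_obj n K0 K H Tmin T = K0 / Tmin + (\<Sum>i\<in>{1..n}. K i / T i + H i * T i)"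

definition P_optimal :: "nat \<Rightarrow> nat \<Rightarrow> real \<Rightarrow> (nat \<Rightarrow> real) \<Rightarrow> (nat \<Rightarrow> real) \<Rightarrow> (nat \<Rightarrow> nat \<Rightarrow> real)
    \<Rightarrow> real \<Rightarrow> (nat \<Rightarrow> real) \<Rightarrow> bool" where
  "P_optimal n D K0 K H \<alpha> Tmin T \<longleftrightarrow> P_feasible n D \<alpha> Tmin T \<and>
     (\<forall>Tmin' T'. P_feasible n D \<alpha> Tmin' T' \<longrightarrow> P_obj n K0 K H Tmin T \<le> P_obj n K0 K H Tmin' T')"

definition OPT_P :: "nat \<Rightarrow> nat \<Rightarrow> real \<Rightarrow> (nat \<Rightarrow> real) \<Rightarrow> (nat \<Rightarrow> real) \<Rightarrow> (nat \<Rightarrow> nat \<Rightarrow> real) \<Rightarrow> real" where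
  "OPT_P n D K0 K H \<alpha> = Inf {P_obj n K0 K H Tmin T | Tmin T. P_feasible n D \<alpha> Tmin T}"

definition grid :: "nat \<Rightarrow> nat \<Rightarrow> real \<Rightarrow> real \<Rightarrow> real set" where
  "grid m k \<theta> Tmin = {real m powr ((real_of_int p + \<theta>) / real k) * Tmin | p::int. True}"

definition round_up :: "nat \<Rightarrow> nat \<Rightarrow> real \<Rightarrow> real \<Rightarrow> real \<Rightarrow> real" where
  "round_up m k \<theta> Tmin t = (LEAST g. g \<in> grid m k \<theta> Tmin \<and> t < g)"

end

theory Submission
  imports Defs
begin


definition wfr :: "real \<Rightarrow> real \<Rightarrow> real" where
  "wfr x \<theta> = real_of_int \<lfloor>x - \<theta>\<rfloor> + 1 + \<theta> - x"

lemma wfr_bounds: "0 < wfr x \<theta> \<and> wfr x \<theta> \<le> 1"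
  unfolding wfr_def by linarith

lemma round_up_eq:
  assumes Tm: "Tm > 0" and t: "t > 0" and k: "k \<ge> 1"
  shows "round_up 2 k \<theta> Tm t = t * 2 powr (wfr (k * log 2 (t/Tm)) \<theta> / k)"
proof -
  define x where "x = k * log 2 (t/Tm)"
  define E where "E y = Tm * 2 powr (y / k)" for y
  have kpos: "real k > 0" using k by simp
  have Emono: "E a < E b \<longleftrightarrow> a < b" for a b
    unfolding E_def using Tm kpos by (simp add: divide_less_cancel)
  have Emono2: "E a \<le> E b \<longleftrightarrow> a \<le> b" for a b
    using Emono by (meson not_less)
  have tE: "t = E x"
  proof -
    have "2 powr (x / k) = t / Tm" unfolding x_def using kpos t Tm by simp
    thus ?thesis unfolding E_def using Tm by simp
  qed
  define p0 where "p0 = \<lfloor>x - \<theta>\<rfloor> + 1"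
  have g: "grid 2 k \<theta> Tm = {E (real_of_int p + \<theta>) | p. True}"
    unfolding grid_def E_def by (simp add: mult.commute)
  have "round_up 2 k \<theta> Tm t = E (real_of_int p0 + \<theta>)"
    unfolding round_up_def
  proof (rule Least_equality)
    show "E (real_of_int p0 + \<theta>) \<in> grid 2 k \<theta> Tm \<and> t < E (real_of_int p0 + \<theta>)"
    proof
      show "E (real_of_int p0 + \<theta>) \<in> grid 2 k \<theta> Tm" unfolding g by blast
      show "t < E (real_of_int p0 + \<theta>)" unfolding tE Emono p0_def by linarith
    qed
  next
    fix y assume "y \<in> grid 2 k \<theta> Tm \<and> t < y"
    then obtain p where y: "y = E (real_of_int p + \<theta>)" and "t < y" unfolding g by auto
    hence "x < real_of_int p + \<theta>" using tE Emono by simp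
    hence "p0 \<le> p" unfolding p0_def by linarith
    thus "E (real_of_int p0 + \<theta>) \<le> y" unfolding y Emono2 by simp
  qed
  also have "\<dots> = t * 2 powr (wfr x \<theta> / k)"
  proof -
    have "E (real_of_int p0 + \<theta>) = Tm * 2 powr (x/k + wfr x \<theta> / k)"
      unfolding E_def wfr_def p0_def by (simp add: add_divide_distrib diff_divide_distrib add.assoc)
    also have "\<dots> = E x * 2 powr (wfr x \<theta> / k)" unfolding E_def by (simp add: powr_add)
    finally show ?thesis using tE by simp
  qed
  finally show ?thesis unfolding x_def .
qed



lemma piece_integral:
  fixes s c a b :: real
  assumes s: "s \<noteq> 0" and ab: "a \<le> b"
    and h: "\<And>\<theta>. \<theta> \<in> {a<..<b} \<Longrightarrow> h \<theta> = 2 powr (s * (\<theta> + c))"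
  shows "(h has_integral ((2 powr (s * (b + c)) - 2 powr (s * (a + c))) / (s * ln 2))) {a..b}"
proof -
  define G where "G \<theta> = exp (s * (\<theta> + c) * ln 2) / (s * ln 2)" for \<theta> :: real
  have G': "(G has_real_derivative (exp (s * (\<theta> + c) * ln 2))) (at \<theta>)" for \<theta>
  proof -
    have "(G has_real_derivative (exp (s * (\<theta> + c) * ln 2) * (s * ln 2) / (s * ln 2))) (at \<theta>)"
      unfolding G_def by (auto intro!: derivative_eq_intros)
    thus ?thesis using s by simp
  qed
  have "(h has_integral (G b - G a)) {a..b}"
  proof (rule fundamental_theorem_of_calculus_interior[OF ab])
    show "continuous_on {a..b} G" unfolding G_def using s by (intro continuous_intros) auto
    fix \<theta> assume th: "\<theta> \<in> {a<..<b}"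
    show "(G has_vector_derivative h \<theta>) (at \<theta>)"
      using G'[of \<theta>] h[OF th] by (simp add: has_real_derivative_iff_has_vector_derivative powr_def)
  qed
  moreover have "G b - G a = (2 powr (s * (b + c)) - 2 powr (s * (a + c))) / (s * ln 2)"
    unfolding G_def powr_def by (simp add: diff_divide_distrib)
  ultimately show ?thesis by simp
qed

lemma wfr_integral:
  fixes s x :: real
  assumes s: "s \<noteq> 0"
  shows "((\<lambda>\<theta>. 2 powr (s * wfr x \<theta>)) has_integral (2 powr s - 1) / (s * ln 2)) {0..1}"
proof -
  define f where "f = x - real_of_int \<lfloor>x\<rfloor>"
  have f: "0 \<le> f" "f < 1" unfolding f_def by linarith+
  have I1: "((\<lambda>\<theta>. 2 powr (s * wfr x \<theta>)) has_integral
        ((2 powr (s * (f + (1 - f))) - 2 powr (s * (0 + (1 - f)))) / (s * ln 2))) {0..f}"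
  proof (rule piece_integral[OF s f(1)])
    fix \<theta> :: real assume "\<theta> \<in> {0<..<f}"
    hence "\<lfloor>x - \<theta>\<rfloor> = \<lfloor>x\<rfloor>" unfolding f_def by (intro floor_unique) (auto, linarith+)
    thus "2 powr (s * wfr x \<theta>) = 2 powr (s * (\<theta> + (1 - f)))" unfolding wfr_def f_def by (simp add: algebra_simps)
  qed
  have I2: "((\<lambda>\<theta>. 2 powr (s * wfr x \<theta>)) has_integral
        ((2 powr (s * (1 + (- f))) - 2 powr (s * (f + (- f)))) / (s * ln 2))) {f..1}"
  proof (rule piece_integral[OF s])
    show "f \<le> 1" using f by simp
    fix \<theta> :: real assume "\<theta> \<in> {f<..<1}"
    hence "\<lfloor>x - \<theta>\<rfloor> = \<lfloor>x\<rfloor> - 1" unfolding f_def by (intro floor_unique) (auto, linarith+)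
    hence "real_of_int \<lfloor>x - \<theta>\<rfloor> = real_of_int \<lfloor>x\<rfloor> - 1" by simp
    hence "wfr x \<theta> = \<theta> + (- f)" unfolding wfr_def f_def by simp
    thus "2 powr (s * wfr x \<theta>) = 2 powr (s * (\<theta> + (- f)))" by simp
  qed
  have "((\<lambda>\<theta>. 2 powr (s * wfr x \<theta>)) has_integral
        ((2 powr (s * (f + (1 - f))) - 2 powr (s * (0 + (1 - f)))) / (s * ln 2)
        + (2 powr (s * (1 + (- f))) - 2 powr (s * (f + (- f)))) / (s * ln 2))) {0..1}"
    by (rule has_integral_combine[OF f(1) _ I1 I2]) (use f in simp)
  moreover have "(2 powr (s * (f + (1 - f))) - 2 powr (s * (0 + (1 - f)))) / (s * ln 2)
        + (2 powr (s * (1 + (- f))) - 2 powr (s * (f + (- f)))) / (s * ln 2)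
        = (2 powr s - 1) / (s * ln 2)"
    by (simp add: diff_divide_distrib add_divide_distrib)
  ultimately show ?thesis by simp
qed



lemma Jcost_bound:
  assumes K0: "K0 \<ge> 0" and a: "a \<ge> 0"
    and N: "\<And>\<Delta>. \<Delta> > 0 \<Longrightarrow> real (Ncount n T \<Delta>) \<le> a * \<Delta> + b"
  shows "Jcost n K0 T \<le> K0 * a" "0 \<le> Jcost n K0 T"
proof -
  define X where "X = Limsup at_top (\<lambda>\<Delta>::real. ereal (real (Ncount n T \<Delta>) / \<Delta>))"
  have X0: "0 \<le> X" unfolding X_def
    by (rule le_Limsup) (auto intro!: eventually_mono[OF eventually_gt_at_top[of 0]])
  have "X \<le> Limsup at_top (\<lambda>\<Delta>::real. ereal (a + b / \<Delta>))" unfolding X_def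
  proof (rule Limsup_mono)
    show "\<forall>\<^sub>F x in at_top. ereal (real (Ncount n T x) / x) \<le> ereal (a + b / x)"
    proof (rule eventually_mono[OF eventually_gt_at_top[of 0]])
      fix x :: real assume x: "0 < x"
      have "real (Ncount n T x) / x \<le> (a * x + b) / x" using N[OF x] x by (simp add: divide_right_mono)
      also have "\<dots> = a + b / x" using x by (simp add: field_simps)
      finally show "ereal (real (Ncount n T x) / x) \<le> ereal (a + b / x)" by simp
    qed
  qed
  also have "\<dots> = ereal a"
  proof (rule lim_imp_Limsup)
    show "\<not> trivial_limit (at_top :: real filter)" by simp
    have "((\<lambda>\<Delta>::real. a + b / \<Delta>) \<longlongrightarrow> a + 0) at_top"
      by (intro tendsto_intros tendsto_divide_0[OF tendsto_const]
          filterlim_at_top_imp_at_infinity[OF filterlim_ident])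
    thus "((\<lambda>\<Delta>::real. ereal (a + b / \<Delta>)) \<longlongrightarrow> ereal a) at_top"
      by (simp add: tendsto_ereal)
  qed
  finally have Xa: "X \<le> ereal a" .
  obtain r where r: "X = ereal r" "0 \<le> r" "r \<le> a" using X0 Xa by (cases X) auto
  show "Jcost n K0 T \<le> K0 * a" "0 \<le> Jcost n K0 T"
    unfolding Jcost_def X_def[symmetric] using r K0 by (auto intro: mult_left_mono)
qed

lemma mult_set_finite: "finite (mult_set g \<Delta>)"
  unfolding mult_set_def by simp

lemma card_mult_set:
  assumes g: "g > 0" and D: "\<Delta> \<ge> 0"
  shows "real (card (mult_set g \<Delta>)) \<le> \<Delta> / g + 1"
proof -
  have "card (mult_set g \<Delta>) \<le> card {0..nat \<lfloor>\<Delta> / g\<rfloor>}"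
    unfolding mult_set_def by (rule card_image_le) simp
  also have "\<dots> = nat \<lfloor>\<Delta> / g\<rfloor> + 1" by simp
  finally have "real (card (mult_set g \<Delta>)) \<le> real (nat \<lfloor>\<Delta> / g\<rfloor>) + 1" by linarith
  also have "real (nat \<lfloor>\<Delta> / g\<rfloor>) \<le> \<Delta> / g" using g D by simp
  finally show ?thesis by simp
qed

lemma mult_set_sub:
  assumes g: "g > 0" and m: "m \<ge> (1::nat)"
  shows "mult_set (real m * g) \<Delta> \<subseteq> mult_set g \<Delta>"
proof
  fix y assume "y \<in> mult_set (real m * g) \<Delta>"
  then obtain j where j: "j \<le> nat \<lfloor>\<Delta> / (real m * g)\<rfloor>" and y: "y = real j * (real m * g)"
    unfolding mult_set_def by auto
  have mpos: "real m > 0" using m by simp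
  have "j * m \<le> nat \<lfloor>\<Delta> / g\<rfloor>"
  proof (cases "j = 0")
    case False
    hence "real j \<le> \<Delta> / (real m * g)" using j by linarith
    hence "real j * real m \<le> \<Delta> / g" using mpos g by (simp add: field_simps)
    hence "real (j * m) \<le> \<Delta> / g" by simp
    thus ?thesis by linarith
  qed simp
  moreover have "y = real (j * m) * g" using y by simp
  ultimately show "y \<in> mult_set g \<Delta>" unfolding mult_set_def by (intro image_eqI[where x="j*m"]) auto
qed

lemma Ncount_bound2:
  assumes g: "g > 0" "g' > 0"
    and T: "\<And>i. i \<in> {1..n} \<Longrightarrow> \<exists>m::nat. m \<ge> 1 \<and> (T i = real m * g \<or> T i = real m * g')"
    and D: "\<Delta> \<ge> 0"
  shows "real (Ncount n T \<Delta>) \<le> (1/g + 1/g') * \<Delta> + 2"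
proof -
  have sub: "(\<Union>i\<in>{1..n}. mult_set (T i) \<Delta>) \<subseteq> mult_set g \<Delta> \<union> mult_set g' \<Delta>"
  proof (rule UN_least)
    fix i assume i: "i \<in> {1..n}"
    from T[OF i] obtain m :: nat where m: "m \<ge> 1" "T i = real m * g \<or> T i = real m * g'" by blast
    thus "mult_set (T i) \<Delta> \<subseteq> mult_set g \<Delta> \<union> mult_set g' \<Delta>"
      using mult_set_sub[OF g(1) m(1), of \<Delta>] mult_set_sub[OF g(2) m(1), of \<Delta>] by auto
  qed
  have "Ncount n T \<Delta> \<le> card (mult_set g \<Delta> \<union> mult_set g' \<Delta>)"
    unfolding Ncount_def by (rule card_mono[OF _ sub]) (simp add: mult_set_finite)
  also have "\<dots> \<le> card (mult_set g \<Delta>) + card (mult_set g' \<Delta>)" by (rule card_Un_le)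
  finally have "real (Ncount n T \<Delta>) \<le> real (card (mult_set g \<Delta>)) + real (card (mult_set g' \<Delta>))"
    by linarith
  also have "\<dots> \<le> (\<Delta> / g + 1) + (\<Delta> / g' + 1)"
    using card_mult_set[OF g(1) D] card_mult_set[OF g(2) D] by linarith
  finally show ?thesis by (simp add: field_simps)
qed

lemma Ncount_bound1:
  assumes g: "g > 0"
    and T: "\<And>i. i \<in> {1..n} \<Longrightarrow> \<exists>m::nat. m \<ge> 1 \<and> T i = real m * g"
    and D: "\<Delta> \<ge> 0"
  shows "real (Ncount n T \<Delta>) \<le> (1/g) * \<Delta> + 1"
proof -
  have sub: "(\<Union>i\<in>{1..n}. mult_set (T i) \<Delta>) \<subseteq> mult_set g \<Delta>"
  proof (rule UN_least)
    fix i assume i: "i \<in> {1..n}"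
    from T[OF i] obtain m :: nat where m: "m \<ge> 1" "T i = real m * g" by blast
    thus "mult_set (T i) \<Delta> \<subseteq> mult_set g \<Delta>"
      using mult_set_sub[OF g(1) m(1), of \<Delta>] by auto
  qed
  have "Ncount n T \<Delta> \<le> card (mult_set g \<Delta>)"
    unfolding Ncount_def by (rule card_mono[OF _ sub]) (simp add: mult_set_finite)
  hence "real (Ncount n T \<Delta>) \<le> real (card (mult_set g \<Delta>))" by linarith
  also have "\<dots> \<le> \<Delta> / g + 1" using card_mult_set[OF g D] .
  finally show ?thesis by simp
qed

lemma Ncount_scale:
  assumes s: "s > 0"
  shows "Ncount n (\<lambda>i. s * T i) \<Delta> = Ncount n T (\<Delta> / s)"
proof -
  have "mult_set (s * g) \<Delta> = (\<lambda>y. s * y) ` mult_set g (\<Delta> / s)" for g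
    unfolding mult_set_def image_image by (simp add: mult.commute mult.left_commute)
  hence "(\<Union>i\<in>{1..n}. mult_set (s * T i) \<Delta>) = (\<lambda>y. s * y) ` (\<Union>i\<in>{1..n}. mult_set (T i) (\<Delta> / s))"
    by (simp add: image_UN)
  moreover have "inj (\<lambda>y::real. s * y)" using s by (intro injI) simp
  ultimately show ?thesis unfolding Ncount_def using card_image[OF inj_on_subset[OF _ subset_UNIV]] by metis
qed

lemma Jcost_scale:
  assumes s: "s > 0"
  shows "Jcost n K0 (\<lambda>i. s * T i) = Jcost n K0 T / s"
proof -
  let ?h = "\<lambda>\<Delta>::real. ereal (real (Ncount n T \<Delta>) / \<Delta>)"
  have fm: "filtermap (\<lambda>\<Delta>::real. \<Delta> / s) at_top = at_top"
  proof (rule filtermap_fun_inverse[where g = "\<lambda>\<Delta>. s * \<Delta>"])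
    show "filterlim (\<lambda>\<Delta>::real. s * \<Delta>) at_top at_top"
      using s by (intro filterlim_tendsto_pos_mult_at_top[OF tendsto_const] filterlim_ident) auto
    have "filterlim (\<lambda>\<Delta>::real. (1/s) * \<Delta>) at_top at_top"
      using s by (intro filterlim_tendsto_pos_mult_at_top[OF tendsto_const] filterlim_ident) auto
    moreover have "(\<lambda>\<Delta>::real. (1/s) * \<Delta>) = (\<lambda>\<Delta>. \<Delta> / s)" by auto
    ultimately show "filterlim (\<lambda>\<Delta>::real. \<Delta> / s) at_top at_top" by simp
    show "\<forall>\<^sub>F x in at_top. s * x / s = x" using s by simp
  qed
  have inj: "inj (\<lambda>\<Delta>::real. \<Delta> / s)" using s by (intro injI) simp
  have "Limsup at_top (\<lambda>\<Delta>::real. ereal (real (Ncount n (\<lambda>i. s * T i) \<Delta>) / \<Delta>))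
      = Limsup at_top (\<lambda>\<Delta>. ereal (1/s) * ?h (\<Delta> / s))"
    using s by (intro arg_cong[where f = "Limsup at_top"] ext) (simp add: Ncount_scale field_simps)
  also have "\<dots> = ereal (1/s) * Limsup at_top (\<lambda>\<Delta>. ?h (\<Delta> / s))"
    using s by (intro Limsup_ereal_mult_left) auto
  also have "Limsup at_top (\<lambda>\<Delta>. ?h (\<Delta> / s)) = Limsup at_top ?h"
    using Limsup_filtermap_eq[OF inj, of at_top ?h] fm by simp
  finally show ?thesis unfolding Jcost_def by (simp add: real_of_ereal_mult)
qed



lemma map_floor_measurable:
  "(\<lambda>\<theta>::real. map (\<lambda>i. \<lfloor>x i - \<theta>\<rfloor>) xs) \<in> borel \<rightarrow>\<^sub>M count_space UNIV"
proof (induction xs)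
  case Nil
  show ?case by simp
next
  case (Cons j xs)
  let ?g = "\<lambda>\<theta>::real. map (\<lambda>i. \<lfloor>x i - \<theta>\<rfloor>) xs"
  have fj: "(\<lambda>\<theta>::real. \<lfloor>x j - \<theta>\<rfloor>) \<in> borel \<rightarrow>\<^sub>M count_space UNIV" by measurable
  show ?case unfolding measurable_count_space_eq2_countable
  proof (intro conjI ballI)
    show "(\<lambda>\<theta>. map (\<lambda>i. \<lfloor>x i - \<theta>\<rfloor>) (j # xs)) \<in> space borel \<rightarrow> UNIV" by simp
    fix a :: "int list" assume "a \<in> UNIV"
    show "(\<lambda>\<theta>. map (\<lambda>i. \<lfloor>x i - \<theta>\<rfloor>) (j # xs)) -` {a} \<inter> space borel \<in> sets borel"
    proof (cases a)
      case Nil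
      hence "(\<lambda>\<theta>. map (\<lambda>i. \<lfloor>x i - \<theta>\<rfloor>) (j # xs)) -` {a} \<inter> space borel = {}" by auto
      thus ?thesis by simp
    next
      case (Cons h t)
      have "(\<lambda>\<theta>. map (\<lambda>i. \<lfloor>x i - \<theta>\<rfloor>) (j # xs)) -` {a} \<inter> space borel
          = ((\<lambda>\<theta>::real. \<lfloor>x j - \<theta>\<rfloor>) -` {h} \<inter> space borel) \<inter> (?g -` {t} \<inter> space borel)"
        using Cons by auto
      moreover have "(\<lambda>\<theta>::real. \<lfloor>x j - \<theta>\<rfloor>) -` {h} \<inter> space borel \<in> sets borel"
        using fj unfolding measurable_count_space_eq2_countable by auto
      moreover have "?g -` {t} \<inter> space borel \<in> sets borel"
        using Cons.IH unfolding measurable_count_space_eq2_countable by auto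
      ultimately show ?thesis by auto
    qed
  qed
qed

lemma round_up_eq2:
  assumes Tm: "Tm > 0" and t: "t > 0" and k: "k \<ge> 1"
  shows "round_up 2 k \<theta> Tm t
      = Tm * 2 powr ((real_of_int \<lfloor>k * log 2 (t/Tm) - \<theta>\<rfloor> + 1 + \<theta>) / k)"
proof -
  define x where "x = k * log 2 (t/Tm)"
  have kpos: "real k > 0" using k by simp
  have tx: "t = Tm * 2 powr (x / k)" unfolding x_def using kpos t Tm by simp
  have "round_up 2 k \<theta> Tm t = Tm * (2 powr (x / k) * 2 powr (wfr x \<theta> / k))"
    using round_up_eq[OF Tm t k] tx unfolding x_def by simp
  also have "\<dots> = Tm * 2 powr ((x + wfr x \<theta>) / k)" by (simp add: powr_add add_divide_distrib)
  also have "x + wfr x \<theta> = real_of_int \<lfloor>x - \<theta>\<rfloor> + 1 + \<theta>" unfolding wfr_def by simp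
  finally show ?thesis unfolding x_def .
qed

lemma Jcost_cong:
  assumes "\<And>i. i \<in> {1..n} \<Longrightarrow> T i = T' i"
  shows "Jcost n K0 T = Jcost n K0 T'"
proof -
  have "Ncount n T = Ncount n T'" unfolding Ncount_def[abs_def] using assms by (intro ext) simp
  thus ?thesis unfolding Jcost_def by simp
qed

lemma Fcost_measurable:
  assumes Tm: "Tm > 0" and t: "\<And>i. i \<in> {1..n} \<Longrightarrow> Tstar i > 0" and k: "k \<ge> 1"
  shows "(\<lambda>\<theta>. Fcost n K0 K H (\<lambda>i. round_up 2 k \<theta> Tm (Tstar i))) \<in> borel_measurable borel"
proof -
  define x where "x i = k * log 2 (Tstar i / Tm)" for i
  define G where "G l = Jcost n K0 (\<lambda>i. Tm * 2 powr ((real_of_int (l ! (i - 1)) + 1) / k))"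
    for l :: "int list"
  have kpos: "real k > 0" using k by simp
  have R: "round_up 2 k \<theta> Tm (Tstar i) = Tm * 2 powr ((real_of_int \<lfloor>x i - \<theta>\<rfloor> + 1 + \<theta>) / k)"
    if "i \<in> {1..n}" for i \<theta>
    using round_up_eq2[OF Tm t[OF that] k] unfolding x_def by simp
  have J: "Jcost n K0 (\<lambda>i. round_up 2 k \<theta> Tm (Tstar i))
      = G (map (\<lambda>i. \<lfloor>x i - \<theta>\<rfloor>) [1..<n+1]) / 2 powr (\<theta> / k)" for \<theta>
  proof -
    have "Jcost n K0 (\<lambda>i. round_up 2 k \<theta> Tm (Tstar i))
        = Jcost n K0 (\<lambda>i. 2 powr (\<theta> / k) * (Tm * 2 powr ((real_of_int \<lfloor>x i - \<theta>\<rfloor> + 1) / k)))"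
    proof (rule Jcost_cong)
      fix i assume i: "i \<in> {1..n}"
      have "(real_of_int \<lfloor>x i - \<theta>\<rfloor> + 1 + \<theta>) / k = \<theta> / k + (real_of_int \<lfloor>x i - \<theta>\<rfloor> + 1) / k"
        by (simp add: add_divide_distrib)
      thus "round_up 2 k \<theta> Tm (Tstar i)
          = 2 powr (\<theta> / k) * (Tm * 2 powr ((real_of_int \<lfloor>x i - \<theta>\<rfloor> + 1) / k))"
        unfolding R[OF i] by (simp add: powr_add)
    qed
    also have "\<dots> = Jcost n K0 (\<lambda>i. Tm * 2 powr ((real_of_int \<lfloor>x i - \<theta>\<rfloor> + 1) / k)) / 2 powr (\<theta> / k)"
      by (rule Jcost_scale) simp
    also have "Jcost n K0 (\<lambda>i. Tm * 2 powr ((real_of_int \<lfloor>x i - \<theta>\<rfloor> + 1) / k))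
        = G (map (\<lambda>i. \<lfloor>x i - \<theta>\<rfloor>) [1..<n+1])"
      unfolding G_def
    proof (rule Jcost_cong)
      fix i assume i: "i \<in> {1..n}"
      have "map (\<lambda>i. \<lfloor>x i - \<theta>\<rfloor>) [1..<n+1] ! (i - 1) = \<lfloor>x i - \<theta>\<rfloor>"
      proof -
        have "i - 1 < length [1..<n+1]" using i by auto
        hence "map (\<lambda>i. \<lfloor>x i - \<theta>\<rfloor>) [1..<n+1] ! (i - 1) = \<lfloor>x ([1..<n+1] ! (i - 1)) - \<theta>\<rfloor>"
          by (rule nth_map)
        also have "[1..<n+1] ! (i - 1) = i" using i by (subst nth_upt) auto
        finally show ?thesis .
      qed
      thus "Tm * 2 powr ((real_of_int \<lfloor>x i - \<theta>\<rfloor> + 1) / real k) =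
         Tm * 2 powr ((real_of_int (map (\<lambda>i. \<lfloor>x i - \<theta>\<rfloor>) [1..<n+1] ! (i - 1)) + 1) / real k)"
        by simp
    qed
    finally show ?thesis .
  qed
  have S: "(\<Sum>i\<in>{1..n}. K i / round_up 2 k \<theta> Tm (Tstar i) + H i * round_up 2 k \<theta> Tm (Tstar i))
      = (\<Sum>i\<in>{1..n}. K i / (Tm * 2 powr ((real_of_int \<lfloor>x i - \<theta>\<rfloor> + 1 + \<theta>) / k))
            + H i * (Tm * 2 powr ((real_of_int \<lfloor>x i - \<theta>\<rfloor> + 1 + \<theta>) / k)))" for \<theta>
    by (rule sum.cong) (simp_all add: R)
  have mJ: "(\<lambda>\<theta>::real. G (map (\<lambda>i. \<lfloor>x i - \<theta>\<rfloor>) [1..<n+1]) / 2 powr (\<theta> / k)) \<in> borel_measurable borel"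
    by (rule measurable_compose_countable[where f = "\<lambda>l \<theta>. G l / 2 powr (\<theta> / k)",
          OF _ map_floor_measurable]) measurable
  have mS: "(\<lambda>\<theta>::real. (\<Sum>i\<in>{1..n}. K i / (Tm * 2 powr ((real_of_int \<lfloor>x i - \<theta>\<rfloor> + 1 + \<theta>) / k))
            + H i * (Tm * 2 powr ((real_of_int \<lfloor>x i - \<theta>\<rfloor> + 1 + \<theta>) / k)))) \<in> borel_measurable borel"
    by measurable
  show ?thesis unfolding Fcost_def J S using mJ mS by measurable
qed



lemma round_up_pos:
  assumes "Tm > 0" "t > 0" "k \<ge> 1"
  shows "round_up 2 k \<theta> Tm t > 0"
  using round_up_eq[OF assms] assms by simp

lemma round_ratio:
  assumes Tm: "Tm > 0" and t: "t \<ge> Tm" and k: "k \<ge> 1"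
  shows "\<exists>d::nat. round_up 2 k \<theta> Tm t = 2 powr (real d / k) * round_up 2 k \<theta> Tm Tm"
proof -
  have tpos: "t > 0" using Tm t by simp
  define x where "x = k * log 2 (t/Tm)"
  have x0: "x \<ge> 0" unfolding x_def using Tm t by simp
  have R1: "round_up 2 k \<theta> Tm t = Tm * 2 powr ((real_of_int \<lfloor>x - \<theta>\<rfloor> + 1 + \<theta>) / k)"
    using round_up_eq2[OF Tm tpos k] unfolding x_def by simp
  have R0: "round_up 2 k \<theta> Tm Tm = Tm * 2 powr ((real_of_int \<lfloor>- \<theta>\<rfloor> + 1 + \<theta>) / k)"
    using round_up_eq2[OF Tm Tm k] Tm by simp
  have le: "\<lfloor>- \<theta>\<rfloor> \<le> \<lfloor>x - \<theta>\<rfloor>" using x0 by (intro floor_mono) simp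
  define d where "d = nat (\<lfloor>x - \<theta>\<rfloor> - \<lfloor>- \<theta>\<rfloor>)"
  have dd: "real d = real_of_int \<lfloor>x - \<theta>\<rfloor> - real_of_int \<lfloor>- \<theta>\<rfloor>" unfolding d_def using le by simp
  have "2 powr (real d / k) * round_up 2 k \<theta> Tm Tm
      = Tm * (2 powr (real d / k) * 2 powr ((real_of_int \<lfloor>- \<theta>\<rfloor> + 1 + \<theta>) / k))"
    unfolding R0 by simp
  also have "\<dots> = Tm * 2 powr ((real d + (real_of_int \<lfloor>- \<theta>\<rfloor> + 1 + \<theta>)) / k)"
    by (simp add: powr_add add_divide_distrib)
  also have "real d + (real_of_int \<lfloor>- \<theta>\<rfloor> + 1 + \<theta>) = real_of_int \<lfloor>x - \<theta>\<rfloor> + 1 + \<theta>"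
    unfolding dd by simp
  finally show ?thesis unfolding R1 by metis
qed

lemma J1_bound:
  assumes Tm: "Tm > 0" and t: "\<And>i. i \<in> {1..n} \<Longrightarrow> Tstar i \<ge> Tm" and K0: "K0 \<ge> 0"
  shows "Jcost n K0 (\<lambda>i. round_up 2 1 \<theta> Tm (Tstar i)) \<le> K0 * (1 / round_up 2 1 \<theta> Tm Tm)"
        "0 \<le> Jcost n K0 (\<lambda>i. round_up 2 1 \<theta> Tm (Tstar i))"
proof -
  let ?g = "round_up 2 1 \<theta> Tm Tm"
  have g: "?g > 0" using round_up_pos[OF Tm Tm] by simp
  have N: "real (Ncount n (\<lambda>i. round_up 2 1 \<theta> Tm (Tstar i)) \<Delta>) \<le> (1 / ?g) * \<Delta> + 1"
    if "\<Delta> > 0" for \<Delta>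
  proof (rule Ncount_bound1[OF g])
    show "0 \<le> \<Delta>" using that by simp
    fix i assume i: "i \<in> {1..n}"
    obtain d :: nat where d: "round_up 2 1 \<theta> Tm (Tstar i) = 2 powr (real d / 1) * ?g"
      using round_ratio[OF Tm t[OF i], of 1] by auto
    have "round_up 2 1 \<theta> Tm (Tstar i) = real ((2::nat) ^ d) * ?g"
      unfolding d by (simp add: powr_realpow)
    thus "\<exists>m::nat. m \<ge> 1 \<and> round_up 2 1 \<theta> Tm (Tstar i) = real m * ?g"
      by (intro exI[of _ "2^d"]) simp
  qed
  show "Jcost n K0 (\<lambda>i. round_up 2 1 \<theta> Tm (Tstar i)) \<le> K0 * (1 / ?g)"
       "0 \<le> Jcost n K0 (\<lambda>i. round_up 2 1 \<theta> Tm (Tstar i))"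
    using Jcost_bound[OF K0 _ N] g by auto
qed

lemma J2_bound:
  assumes Tm: "Tm > 0" and t: "\<And>i. i \<in> {1..n} \<Longrightarrow> Tstar i \<ge> Tm" and K0: "K0 \<ge> 0"
  shows "Jcost n K0 (\<lambda>i. round_up 2 2 \<theta> Tm (Tstar i))
           \<le> K0 * ((1 + 1 / sqrt 2) * (1 / round_up 2 2 \<theta> Tm Tm))"
        "0 \<le> Jcost n K0 (\<lambda>i. round_up 2 2 \<theta> Tm (Tstar i))"
proof -
  let ?g = "round_up 2 2 \<theta> Tm Tm"
  have g: "?g > 0" using round_up_pos[OF Tm Tm] by simp
  have g': "sqrt 2 * ?g > 0" using g by simp
  have N: "real (Ncount n (\<lambda>i. round_up 2 2 \<theta> Tm (Tstar i)) \<Delta>)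
      \<le> (1 / ?g + 1 / (sqrt 2 * ?g)) * \<Delta> + 2"
    if "\<Delta> > 0" for \<Delta>
  proof (rule Ncount_bound2[OF g g'])
    show "0 \<le> \<Delta>" using that by simp
    fix i assume i: "i \<in> {1..n}"
    obtain d :: nat where d: "round_up 2 2 \<theta> Tm (Tstar i) = 2 powr (real d / 2) * ?g"
      using round_ratio[OF Tm t[OF i], of 2] by auto
    show "\<exists>m::nat. m \<ge> 1 \<and> (round_up 2 2 \<theta> Tm (Tstar i) = real m * ?g
                          \<or> round_up 2 2 \<theta> Tm (Tstar i) = real m * (sqrt 2 * ?g))"
    proof (cases "even d")
      case True
      then obtain e where e: "d = 2 * e" by blast
      have "2 powr (real d / 2) = real ((2::nat) ^ e)" unfolding e by (simp add: powr_realpow)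
      thus ?thesis unfolding d by (intro exI[of _ "2^e"]) simp
    next
      case False
      then obtain e where e: "d = 2 * e + 1" using oddE by blast
      have "2 powr (real d / 2) = 2 powr (real e + 1/2)" unfolding e by (simp add: field_simps)
      also have "\<dots> = real ((2::nat) ^ e) * sqrt 2" by (simp add: powr_add powr_realpow powr_half_sqrt)
      finally show ?thesis unfolding d by (intro exI[of _ "2^e"]) simp
    qed
  qed
  have a: "0 \<le> 1 / ?g + 1 / (sqrt 2 * ?g)" using g by simp
  have eq: "1 / ?g + 1 / (sqrt 2 * ?g) = (1 + 1 / sqrt 2) * (1 / ?g)" using g by (simp add: field_simps)
  show "Jcost n K0 (\<lambda>i. round_up 2 2 \<theta> Tm (Tstar i)) \<le> K0 * ((1 + 1 / sqrt 2) * (1 / ?g))"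
       "0 \<le> Jcost n K0 (\<lambda>i. round_up 2 2 \<theta> Tm (Tstar i))"
    using Jcost_bound[OF K0 a N] unfolding eq by auto
qed



lemma ln2_lower: "(0.69314::real) \<le> ln 2"
proof -
  have s: "(\<lambda>n. - ((-(-1/2::real))^n) / of_nat n) sums ln (1 + (-1/2))"
    by (rule ln_series') simp
  hence "(\<lambda>n. ((1/2::real)^n) / of_nat n) sums (- ln (1/2))"
    using sums_minus by fastforce
  hence s2: "(\<lambda>n. ((1/2::real)^n) / of_nat n) sums ln 2" by (simp add: ln_div)
  have "(\<Sum>n<17. ((1/2::real)^n) / of_nat n) \<le> ln 2"
    using sum_le_suminf[OF sums_summable[OF s2], of "{..<17}"] sums_unique[OF s2] by simp
  moreover have "(\<Sum>n<17. ((1/2::real)^n) / of_nat n) \<ge> 0.69314"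
    by (simp add: eval_nat_numeral)
  ultimately show ?thesis by linarith
qed

lemma sqrt2_bounds: "1.41421 \<le> sqrt (2::real)" "sqrt (2::real) \<le> 1.4142136"
proof -
  show "1.41421 \<le> sqrt (2::real)" by (rule real_le_rsqrt) (simp add: power2_eq_square)
  have "sqrt (2::real) \<le> sqrt (1.4142136^2)" by (rule real_sqrt_le_mono) (simp add: power2_eq_square)
  thus "sqrt (2::real) \<le> 1.4142136" by simp
qed



definition cA :: "nat \<Rightarrow> real" where "cA k = (2 powr (1 / real k) - 1) / ((1 / real k) * ln 2)"
definition cB :: "nat \<Rightarrow> real" where "cB k = (2 powr (- 1 / real k) - 1) / ((- 1 / real k) * ln 2)"

lemma ru_int:
  assumes Tm: "Tm > 0" and t: "t > 0" and k: "k \<ge> 1"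
  shows "((\<lambda>\<theta>. round_up 2 k \<theta> Tm t) has_integral t * cA k) {0..1}"
        "((\<lambda>\<theta>. 1 / round_up 2 k \<theta> Tm t) has_integral (1 / t) * cB k) {0..1}"
proof -
  define x where "x = k * log 2 (t/Tm)"
  have kpos: "real k > 0" using k by simp
  have e1: "(\<lambda>\<theta>. round_up 2 k \<theta> Tm t) = (\<lambda>\<theta>. t * 2 powr ((1 / real k) * wfr x \<theta>))"
    using round_up_eq[OF Tm t k] unfolding x_def by (auto simp: mult.commute)
  have e2: "(\<lambda>\<theta>. 1 / round_up 2 k \<theta> Tm t) = (\<lambda>\<theta>. (1 / t) * 2 powr ((- 1 / real k) * wfr x \<theta>))"
  proof
    fix \<theta>
    have "2 powr ((- 1 / real k) * wfr x \<theta>) = 1 / 2 powr (wfr x \<theta> / k)"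
      by (simp add: powr_minus_divide[symmetric])
    thus "1 / round_up 2 k \<theta> Tm t = (1 / t) * 2 powr ((- 1 / real k) * wfr x \<theta>)"
      using round_up_eq[OF Tm t k] unfolding x_def by simp
  qed
  show "((\<lambda>\<theta>. round_up 2 k \<theta> Tm t) has_integral t * cA k) {0..1}"
    unfolding e1 cA_def by (rule has_integral_mult_right, rule wfr_integral) (use kpos in simp)
  show "((\<lambda>\<theta>. 1 / round_up 2 k \<theta> Tm t) has_integral (1 / t) * cB k) {0..1}"
    unfolding e2 cB_def by (rule has_integral_mult_right, rule wfr_integral) (use kpos in simp)
qed

lemma cAB_vals:
  "cA 1 = 1 / ln 2" "cB 1 = (1/2) / ln 2"
  "cA 2 = 2 * (sqrt 2 - 1) / ln 2" "cB 2 = 2 * (1 - 1 / sqrt 2) / ln 2"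
  unfolding cA_def cB_def
  by (simp_all add: powr_half_sqrt powr_minus_divide field_simps)



lemma aux1: "(0.69314::real) \<le> l \<Longrightarrow> s \<le> (1.4142136::real) \<Longrightarrow>
   0.2555 + (1 - 0.2555) * 2 * (s - 1) \<le> 1.2585 * l"
  by (simp add: field_simps)

lemma aux2: "(0.69314::real) \<le> l \<Longrightarrow> (p / 2 + (1 - p)) / l \<le> 1.2585" if "p = 0.2555" for p :: real
  using that by (simp add: field_simps)

lemma aux3: "(0.69314::real) \<le> l \<Longrightarrow> (p / 2 + (1 - p) * 2 * (1 - 0.7)) / l \<le> 1.2585" if "p = 0.2555" for p :: real
  using that by (simp add: field_simps)

lemma coeffs:
  defines "p \<equiv> (0.2555::real)"
  shows "p * cA 1 + (1 - p) * cA 2 \<le> 1.2585"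
        "p * cB 1 + (1 - p) * ((1 + 1 / sqrt 2) * cB 2) \<le> 1.2585"
        "p * cB 1 + (1 - p) * cB 2 \<le> 1.2585"
proof -
  have L: "0.69314 \<le> ln (2::real)" by (rule ln2_lower)
  have Lp: "ln (2::real) > 0" by simp
  have r: "1.41421 \<le> sqrt (2::real)" "sqrt (2::real) \<le> 1.4142136" by (rule sqrt2_bounds)+
  have rr: "sqrt 2 * sqrt 2 = (2::real)" by simp
  have "p * cA 1 + (1 - p) * cA 2 = (p + (1 - p) * 2 * (sqrt 2 - 1)) / ln 2"
    unfolding cAB_vals by (simp add: field_simps)
  also have "\<dots> \<le> 1.2585"
  proof -
    have "p + (1 - p) * 2 * (sqrt 2 - 1) \<le> 1.2585 * ln 2"
      using aux1[OF L r(2)] unfolding p_def .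
    thus ?thesis using Lp by (simp add: pos_divide_le_eq)
  qed
  finally show "p * cA 1 + (1 - p) * cA 2 \<le> 1.2585" .
  have "(1 + 1 / sqrt 2) * (2 * (1 - 1 / sqrt 2)) = (1::real)"
    using rr by (simp add: field_simps)
  hence "p * cB 1 + (1 - p) * ((1 + 1 / sqrt 2) * cB 2) = (p / 2 + (1 - p)) / ln 2"
    unfolding cAB_vals by (simp add: field_simps)
  also have "\<dots> \<le> 1.2585"
    using aux2[OF p_def[THEN meta_eq_to_obj_eq] L] .
  finally show "p * cB 1 + (1 - p) * ((1 + 1 / sqrt 2) * cB 2) \<le> 1.2585" .
  have "1 / sqrt 2 \<ge> (0.7::real)" using r by (simp add: field_simps)
  hence "cB 2 \<le> 2 * (1 - 0.7) / ln 2" using Lp unfolding cAB_vals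
    by (intro divide_right_mono) auto
  hence "p * cB 1 + (1 - p) * cB 2 \<le> p * cB 1 + (1 - p) * (2 * (1 - 0.7) / ln 2)"
    by (intro add_left_mono mult_left_mono) (auto simp: p_def)
  also have "\<dots> = (p / 2 + (1 - p) * 2 * (1 - 0.7)) / ln 2"
    unfolding cAB_vals by (simp add: field_simps)
  also have "\<dots> \<le> 1.2585"
    using aux3[OF p_def[THEN meta_eq_to_obj_eq] L] .
  finally show "p * cB 1 + (1 - p) * cB 2 \<le> 1.2585" .
qed



lemma ru_bounds:
  assumes "Tm > 0" "t > 0" "k \<ge> 1"
  shows "t < round_up 2 k \<theta> Tm t" "round_up 2 k \<theta> Tm t \<le> 2 * t"
proof -
  have w: "0 < wfr (k * log 2 (t / Tm)) \<theta>" "wfr (k * log 2 (t / Tm)) \<theta> \<le> 1" using wfr_bounds by auto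
  have kp: "real k \<ge> 1" using assms by simp
  have e: "0 < wfr (k * log 2 (t / Tm)) \<theta> / k" "wfr (k * log 2 (t / Tm)) \<theta> / k \<le> 1"
    using w kp by (auto simp: divide_le_eq)
  have "1 < 2 powr (wfr (k * log 2 (t / Tm)) \<theta> / k)" using e(1) by simp
  thus "t < round_up 2 k \<theta> Tm t" unfolding round_up_eq[OF assms] using assms by simp
  have "2 powr (wfr (k * log 2 (t / Tm)) \<theta> / k) \<le> 2 powr 1" using e(2) by (intro powr_mono) auto
  thus "round_up 2 k \<theta> Tm t \<le> 2 * t" unfolding round_up_eq[OF assms] using assms by simp
qed

theorem lemma3p4:
  fixes n D :: nat and K0 :: real and K H Tstar :: "nat \<Rightarrow> real"
    and \<alpha> :: "nat \<Rightarrow> nat \<Rightarrow> real" and Tstar_min :: real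
  assumes "n \<ge> 1" and "D \<ge> 1" and "K0 > 0"
    and "\<And>i. i \<in> {1..n} \<Longrightarrow> K i > 0"
    and "\<And>i. i \<in> {1..n} \<Longrightarrow> H i > 0"
    and "\<And>i d. i \<in> {1..n} \<Longrightarrow> d \<in> {1..D} \<Longrightarrow> \<alpha> i d \<ge> 0"
    and "P_optimal n D K0 K H \<alpha> Tstar_min Tstar"
    and "Tstar_min > 0"
  shows "set_integrable lborel {0..1::real}
           (\<lambda>\<theta>. min (Fcost n K0 K H (\<lambda>i. round_up 2 1 \<theta> Tstar_min (Tstar i)))
                     (Fcost n K0 K H (\<lambda>i. round_up 2 2 \<theta> Tstar_min (Tstar i))))
       \<and> (LINT \<theta>:{0..1::real}|lborel.
            min (Fcost n K0 K H (\<lambda>i. round_up 2 1 \<theta> Tstar_min (Tstar i)))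
                (Fcost n K0 K H (\<lambda>i. round_up 2 2 \<theta> Tstar_min (Tstar i))))
         \<le> 1.2585 * OPT_P n D K0 K H \<alpha>"
proof -
  note Kp = assms(4) and Hp = assms(5)
  have Tm: "Tstar_min > 0" by (rule assms(8))
  have K0: "K0 > 0" by (rule assms(3))
  from assms(7) have feas: "P_feasible n D \<alpha> Tstar_min Tstar"
    and opt: "\<And>Tmin' T'. P_feasible n D \<alpha> Tmin' T' \<Longrightarrow> P_obj n K0 K H Tstar_min Tstar \<le> P_obj n K0 K H Tmin' T'"
    unfolding P_optimal_def by auto
  have Tle: "\<And>i. i \<in> {1..n} \<Longrightarrow> Tstar_min \<le> Tstar i" using feas unfolding P_feasible_def by auto
  have Tpos: "\<And>i. i \<in> {1..n} \<Longrightarrow> Tstar i > 0" using Tle Tm by force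
  have OPT: "OPT_P n D K0 K H \<alpha> = P_obj n K0 K H Tstar_min Tstar"
    unfolding OPT_P_def by (rule cInf_eq_minimum) (use feas opt in auto)
  define F1 where "F1 \<theta> = Fcost n K0 K H (\<lambda>i. round_up 2 1 \<theta> Tstar_min (Tstar i))" for \<theta>
  define F2 where "F2 \<theta> = Fcost n K0 K H (\<lambda>i. round_up 2 2 \<theta> Tstar_min (Tstar i))" for \<theta>
  define M where "M \<theta> = min (F1 \<theta>) (F2 \<theta>)" for \<theta>
  define U1 where "U1 \<theta> = K0 * (1 / round_up 2 1 \<theta> Tstar_min Tstar_min)
     + (\<Sum>i\<in>{1..n}. K i * (1 / round_up 2 1 \<theta> Tstar_min (Tstar i)) + H i * round_up 2 1 \<theta> Tstar_min (Tstar i))"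
    for \<theta>
  define U2 where "U2 \<theta> = K0 * ((1 + 1 / sqrt 2) * (1 / round_up 2 2 \<theta> Tstar_min Tstar_min))
     + (\<Sum>i\<in>{1..n}. K i * (1 / round_up 2 2 \<theta> Tstar_min (Tstar i)) + H i * round_up 2 2 \<theta> Tstar_min (Tstar i))"
    for \<theta>
  define p where "p = (0.2555::real)"
  define V where "V \<theta> = p * U1 \<theta> + (1 - p) * U2 \<theta>" for \<theta>
  define B where "B = K0 * (1 / Tstar_min) + (\<Sum>i\<in>{1..n}. K i * (1 / Tstar i) + H i * (2 * Tstar i))"

  have sumeq: "(\<Sum>i\<in>{1..n}. K i / round_up 2 k \<theta> Tstar_min (Tstar i) + H i * round_up 2 k \<theta> Tstar_min (Tstar i))
     = (\<Sum>i\<in>{1..n}. K i * (1 / round_up 2 k \<theta> Tstar_min (Tstar i)) + H i * round_up 2 k \<theta> Tstar_min (Tstar i))"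
    for k \<theta> by simp
  have sum_nonneg: "0 \<le> (\<Sum>i\<in>{1..n}. K i * (1 / round_up 2 k \<theta> Tstar_min (Tstar i)) + H i * round_up 2 k \<theta> Tstar_min (Tstar i))"
    if k: "k \<ge> 1" for k \<theta>
  proof (rule sum_nonneg)
    fix i assume i: "i \<in> {1..n}"
    have "round_up 2 k \<theta> Tstar_min (Tstar i) > 0" by (rule round_up_pos[OF Tm Tpos[OF i] k])
    thus "0 \<le> K i * (1 / round_up 2 k \<theta> Tstar_min (Tstar i)) + H i * round_up 2 k \<theta> Tstar_min (Tstar i)"
      using Kp[OF i] Hp[OF i] by simp
  qed
  have sum_le: "(\<Sum>i\<in>{1..n}. K i * (1 / round_up 2 k \<theta> Tstar_min (Tstar i)) + H i * round_up 2 k \<theta> Tstar_min (Tstar i))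
      \<le> (\<Sum>i\<in>{1..n}. K i * (1 / Tstar i) + H i * (2 * Tstar i))"
    if k: "k \<ge> 1" for k \<theta>
  proof (rule sum_mono)
    fix i assume i: "i \<in> {1..n}"
    note b = ru_bounds[OF Tm Tpos[OF i] k, of \<theta>]
    have "1 / round_up 2 k \<theta> Tstar_min (Tstar i) \<le> 1 / Tstar i"
      using b Tpos[OF i] by (intro divide_left_mono) auto
    thus "K i * (1 / round_up 2 k \<theta> Tstar_min (Tstar i)) + H i * round_up 2 k \<theta> Tstar_min (Tstar i)
        \<le> K i * (1 / Tstar i) + H i * (2 * Tstar i)"
      using b Kp[OF i] Hp[OF i] by (intro add_mono mult_left_mono) auto
  qed
  have g1: "1 / round_up 2 k \<theta> Tstar_min Tstar_min \<le> 1 / Tstar_min" if "k \<ge> 1" for k \<theta>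
    using ru_bounds[OF Tm Tm that, of \<theta>] Tm by (intro divide_left_mono) auto

  have F1U1: "F1 \<theta> \<le> U1 \<theta>" and F1nn: "0 \<le> F1 \<theta>" for \<theta>
    using J1_bound[of Tstar_min n Tstar K0 \<theta>, OF Tm Tle] K0 sum_nonneg[of 1 \<theta>]
    unfolding F1_def U1_def Fcost_def sumeq by auto
  have F2U2: "F2 \<theta> \<le> U2 \<theta>" and F2nn: "0 \<le> F2 \<theta>" for \<theta>
    using J2_bound[of Tstar_min n Tstar K0 \<theta>, OF Tm Tle] K0 sum_nonneg[of 2 \<theta>]
    unfolding F2_def U2_def Fcost_def sumeq by auto
  have U1B: "U1 \<theta> \<le> B" for \<theta>
    unfolding U1_def B_def using sum_le[of 1 \<theta>] g1[of 1 \<theta>] K0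
    by (intro add_mono mult_left_mono) auto
  have MV: "M \<theta> \<le> V \<theta>" for \<theta>
  proof -
    have "M \<theta> \<le> p * F1 \<theta> + (1 - p) * F2 \<theta>"
      unfolding M_def p_def by (simp add: min_def)
    also have "\<dots> \<le> V \<theta>" unfolding V_def p_def using F1U1 F2U2
      by (intro add_mono mult_left_mono) auto
    finally show ?thesis .
  qed
  have Mb: "norm (M \<theta>) \<le> B" for \<theta>
  proof -
    have "0 \<le> M \<theta>" unfolding M_def using F1nn F2nn by simp
    moreover have "M \<theta> \<le> B" using F1U1[of \<theta>] U1B[of \<theta>] unfolding M_def by simp
    ultimately show ?thesis by simp
  qed
  have Mmeas: "M \<in> borel_measurable borel"
  proof -
    have "F1 \<in> borel_measurable borel" unfolding F1_def[abs_def]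
      by (rule Fcost_measurable[OF Tm Tpos]) auto
    moreover have "F2 \<in> borel_measurable borel" unfolding F2_def[abs_def]
      by (rule Fcost_measurable[OF Tm Tpos]) auto
    ultimately show ?thesis unfolding M_def[abs_def] by measurable
  qed
  have Mint: "set_integrable lborel {0..1::real} M"
    unfolding set_integrable_def
    by (rule integrableI_bounded_set_indicator[where B = B]) (use Mmeas Mb in auto)

  define I1 where "I1 = K0 * ((1 / Tstar_min) * cB 1)
     + (\<Sum>i\<in>{1..n}. K i * ((1 / Tstar i) * cB 1) + H i * (Tstar i * cA 1))"
  define I2 where "I2 = K0 * ((1 + 1 / sqrt 2) * ((1 / Tstar_min) * cB 2))
     + (\<Sum>i\<in>{1..n}. K i * ((1 / Tstar i) * cB 2) + H i * (Tstar i * cA 2))"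
  have hU1: "(U1 has_integral I1) {0..1}"
    unfolding U1_def[abs_def] I1_def
    by (intro has_integral_add has_integral_mult_right has_integral_sum ru_int Tm Tpos) auto
  have hU2: "(U2 has_integral I2) {0..1}"
    unfolding U2_def[abs_def] I2_def
    by (intro has_integral_add has_integral_mult_right has_integral_sum ru_int Tm Tpos) auto
  have hV: "(V has_integral (p * I1 + (1 - p) * I2)) {0..1}"
    unfolding V_def[abs_def] by (intro has_integral_add has_integral_mult_right hU1 hU2)

  have "(LINT \<theta>:{0..1::real}|lborel. M \<theta>) = integral {0..1} M"
    by (rule set_borel_integral_eq_integral(2)[OF Mint])
  also have "\<dots> \<le> integral {0..1} V"
    by (rule integral_le[OF set_borel_integral_eq_integral(1)[OF Mint]])
       (use hV MV in \<open>auto simp: has_integral_integrable\<close>)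
  also have "\<dots> = p * I1 + (1 - p) * I2" using hV by (rule integral_unique)
  also have "\<dots> \<le> 1.2585 * OPT_P n D K0 K H \<alpha>"
  proof -
    note c = coeffs[folded p_def]
    have j: "p * (K0 * ((1 / Tstar_min) * cB 1)) + (1 - p) * (K0 * ((1 + 1 / sqrt 2) * ((1 / Tstar_min) * cB 2)))
        \<le> 1.2585 * (K0 / Tstar_min)"
    proof -
      have "p * (K0 * ((1 / Tstar_min) * cB 1)) + (1 - p) * (K0 * ((1 + 1 / sqrt 2) * ((1 / Tstar_min) * cB 2)))
          = (K0 / Tstar_min) * (p * cB 1 + (1 - p) * ((1 + 1 / sqrt 2) * cB 2))"
        using Tm by (simp add: field_simps)
      also have "\<dots> \<le> (K0 / Tstar_min) * 1.2585"
        using c(2) K0 Tm by (intro mult_left_mono) auto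
      finally show ?thesis by simp
    qed
    have each: "p * (K i * ((1 / Tstar i) * cB 1) + H i * (Tstar i * cA 1))
        + (1 - p) * (K i * ((1 / Tstar i) * cB 2) + H i * (Tstar i * cA 2))
        \<le> 1.2585 * (K i / Tstar i + H i * Tstar i)" if i: "i \<in> {1..n}" for i
    proof -
      have "p * (K i * ((1 / Tstar i) * cB 1) + H i * (Tstar i * cA 1))
        + (1 - p) * (K i * ((1 / Tstar i) * cB 2) + H i * (Tstar i * cA 2))
        = (K i / Tstar i) * (p * cB 1 + (1 - p) * cB 2) + (H i * Tstar i) * (p * cA 1 + (1 - p) * cA 2)"
        using Tpos[OF i] by (simp add: field_simps)
      also have "\<dots> \<le> (K i / Tstar i) * 1.2585 + (H i * Tstar i) * 1.2585"
        using c(1,3) Kp[OF i] Hp[OF i] Tpos[OF i] by (intro add_mono mult_left_mono) auto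
      also have "\<dots> = 1.2585 * (K i / Tstar i + H i * Tstar i)" by (metis distrib_right mult.commute)
      finally show ?thesis .
    qed
    have "p * I1 + (1 - p) * I2
        = (p * (K0 * ((1 / Tstar_min) * cB 1)) + (1 - p) * (K0 * ((1 + 1 / sqrt 2) * ((1 / Tstar_min) * cB 2))))
          + (\<Sum>i\<in>{1..n}. p * (K i * ((1 / Tstar i) * cB 1) + H i * (Tstar i * cA 1))
               + (1 - p) * (K i * ((1 / Tstar i) * cB 2) + H i * (Tstar i * cA 2)))"
    proof -
      have ab: "p * (a + S1) + (1 - p) * (b + S2) = (p * a + (1 - p) * b) + (p * S1 + (1 - p) * S2)"
        for a b S1 S2 :: real by (simp add: algebra_simps)
      have sd: "(\<Sum>i\<in>{1..n}. p * f i + (1 - p) * g i) = p * sum f {1..n} + (1 - p) * sum g {1..n}"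
        for f g :: "nat \<Rightarrow> real" by (simp add: sum.distrib sum_distrib_left)
      show ?thesis unfolding sd unfolding I1_def I2_def ab ..
    qed
    also have "\<dots> \<le> 1.2585 * (K0 / Tstar_min) + (\<Sum>i\<in>{1..n}. 1.2585 * (K i / Tstar i + H i * Tstar i))"
      using j each by (intro add_mono sum_mono) auto
    also have "\<dots> = 1.2585 * OPT_P n D K0 K H \<alpha>"
      unfolding OPT P_obj_def distrib_left[of "1.2585::real"] sum_distrib_left ..
    finally show ?thesis .
  qed
  finally have "(LINT \<theta>:{0..1::real}|lborel. M \<theta>) \<le> 1.2585 * OPT_P n D K0 K H \<alpha>" .
  with Mint show ?thesis unfolding M_def F1_def F2_def by simp
qed

end
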